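(* Let $k\ge s\ge1$ and let the distinct abscissae $\tau_1,\dots,\tau_k\in[0,1]$ be such that the interpolatory quadrature formula $(\omega_i,\tau_i)_{i=1}^k$ has order at least $2s$ (i.e. is exact for all polynomials of degree at most $2s-1$). Then HBVM$(k,s)$ is perfectly $A$-stable, whatever the choice of the fundamental abscissae $c_1,\dots,c_s$ among the $\{\tau_i\}$.
   Context: $\omega_i=\int_0^1\ell_i(t)\,\mathrm{d}t$ with $\ell_i$ the Lagrange polynomials on the nodes $\{\tau_i\}$. Let $P_i(t)=\sqrt{2i-1}\,\hat P_{i-1}(t)$, where $\hat P_{i-1}$ is the shifted Legendre polynomial of degree $i-1$ on $[0,1]$ (so $\{P_i\}$ is orthonormal on $[0,1]$). HBVM$(k,s)$ is the Runge--Kutta method with abscissae $\tau_i$, weights $\omega_i$ and Butcher matrix $A=\mathcal I_s\mathcal P_s^T\Omega$, where $\Omega=\mathrm{diag}(\omega_1,\dots,\omega_k)$, $(\mathcal I_s)_{ij}=\int_0^{\tau_i}P_j(x)\,\mathrm{d}x$, $(\mathcal P_s)_{ij}=P_j(\tau_i)$ ($i=1,\dots,k$, $j=1,\dots,s$). The $\{\tau_i\}$ are split into $s$ fundamental and $k-s$ silent abscissae. A method is perfectly $A$-stable if, applied to the test equation $y'=\lambda y$, its region of absolute stability $\{q=h\lambda\in\mathbb C: |R(q)|<1\}$ coincides exactly with the open left half complex plane $\mathbb C^-$. *)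

theory Defs
  imports "HOL-Analysis.Analysis" "HOL-Computational_Algebra.Polynomial"
begin

definition shifted_legendre :: "nat \<Rightarrow> real \<Rightarrow> real" where
  "shifted_legendre n x =
     (\<Sum>j\<le>n. (-1) ^ (n + j) * real (n choose j) * real ((n + j) choose j) * x ^ j)"

text \<open>Orthonormal basis, 0-based: orth_leg j = P_(j+1) = sqrt(2j+1) * shifted Legendre of degree j.\<close>
definition orth_leg :: "nat \<Rightarrow> real \<Rightarrow> real" where
  "orth_leg j x = sqrt (2 * real j + 1) * shifted_legendre j x"

definition lagrange_basis :: "(nat \<Rightarrow> real) \<Rightarrow> nat \<Rightarrow> nat \<Rightarrow> real \<Rightarrow> real" where
  "lagrange_basis \<tau> k i t = (\<Prod>m\<in>{..<k} - {i}. (t - \<tau> m) / (\<tau> i - \<tau> m))"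

definition quad_weight :: "(nat \<Rightarrow> real) \<Rightarrow> nat \<Rightarrow> nat \<Rightarrow> real" where
  "quad_weight \<tau> k i = integral {0..1} (lagrange_basis \<tau> k i)"

text \<open>Butcher matrix A = I_s P_s^T Omega of HBVM(k,s), 0-based indices.\<close>
definition hbvm_A :: "(nat \<Rightarrow> real) \<Rightarrow> nat \<Rightarrow> nat \<Rightarrow> nat \<Rightarrow> nat \<Rightarrow> real" where
  "hbvm_A \<tau> k s i j =
     (\<Sum>l<s. integral {0..\<tau> i} (orth_leg l) * orth_leg l (\<tau> j) * quad_weight \<tau> k j)"

text \<open>Stage equations of a k-stage RK method (A,b) applied to y' = lambda y with q = h lambda, y0 = 1.\<close>
definition rk_stages_ok :: "(nat \<Rightarrow> nat \<Rightarrow> real) \<Rightarrow> nat \<Rightarrow> complex \<Rightarrow> (nat \<Rightarrow> complex) \<Rightarrow> bool" where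
  "rk_stages_ok A k q Y \<longleftrightarrow> (\<forall>i. k \<le> i \<longrightarrow> Y i = 0) \<and>
     (\<forall>i<k. Y i = 1 + q * (\<Sum>j<k. complex_of_real (A i j) * Y j))"

text \<open>Stability function R(q) = 1 + q b^T (I - qA)^{-1} e (meaningful when the stage system is uniquely solvable).\<close>
definition rk_stability_fun :: "(nat \<Rightarrow> nat \<Rightarrow> real) \<Rightarrow> (nat \<Rightarrow> real) \<Rightarrow> nat \<Rightarrow> complex \<Rightarrow> complex" where
  "rk_stability_fun A b k q =
     (let Y = (THE Y. rk_stages_ok A k q Y) in 1 + q * (\<Sum>j<k. complex_of_real (b j) * Y j))"

definition rk_abs_stability_region :: "(nat \<Rightarrow> nat \<Rightarrow> real) \<Rightarrow> (nat \<Rightarrow> real) \<Rightarrow> nat \<Rightarrow> complex set" where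
  "rk_abs_stability_region A b k =
     {q. (\<exists>!Y. rk_stages_ok A k q Y) \<and> cmod (rk_stability_fun A b k q) < 1}"

definition perfectly_A_stable :: "(nat \<Rightarrow> nat \<Rightarrow> real) \<Rightarrow> (nat \<Rightarrow> real) \<Rightarrow> nat \<Rightarrow> bool" where
  "perfectly_A_stable A b k \<longleftrightarrow> rk_abs_stability_region A b k = {q. Re q < 0}"

end

theory Submission imports Defs "Jordan_Normal_Form.Determinant" begin

lemma solve_lin:
  fixes M :: "nat \<Rightarrow> nat \<Rightarrow> complex" and b :: "nat \<Rightarrow> complex"
  assumes "\<And>v. (\<forall>l<n. (\<Sum>m<n. M l m * v m) = 0) \<Longrightarrow> (\<forall>l<n. v l = 0)"
  shows "\<exists>v. \<forall>l<n. (\<Sum>m<n. M l m * v m) = b l"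
proof -
  define A where "A = Matrix.mat n n (\<lambda>(i,j). M i j)"
  have A: "A \<in> carrier_mat n n" unfolding A_def by auto
  have "det A \<noteq> 0"
  proof
    assume "det A = 0"
    then obtain v where v: "v \<in> carrier_vec n" "v \<noteq> 0\<^sub>v n" "A *\<^sub>v v = 0\<^sub>v n"
      using det_0_iff_vec_prod_zero_field[OF A] by auto
    have "\<forall>l<n. (\<Sum>m<n. M l m * v $ m) = 0"
    proof (intro allI impI)
      fix l assume l: "l < n"
      have "(A *\<^sub>v v) $ l = 0" using v(3) l by simp
      thus "(\<Sum>m<n. M l m * v $ m) = 0" using l v(1)
        by (simp add: A_def mult_mat_vec_def scalar_prod_def lessThan_atLeast0)
    qed
    hence "\<forall>l<n. v $ l = 0" using assms by blast
    hence "v = 0\<^sub>v n" using v(1) by (intro eq_vecI) auto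
    with v(2) show False by simp
  qed
  from det_non_zero_imp_unit[OF A this]
  obtain Q where Q: "Q \<in> carrier_mat n n" "A * Q = 1\<^sub>m n"
    unfolding Units_def ring_mat_def by auto
  define x where "x = Q *\<^sub>v Matrix.vec n b"
  have "A *\<^sub>v x = Matrix.vec n b"
    unfolding x_def using Q A by (simp add: assoc_mult_mat_vec[symmetric])
  show ?thesis
  proof (intro exI allI impI)
    fix l assume l: "l < n"
    have "(A *\<^sub>v x) $ l = b l" using \<open>A *\<^sub>v x = Matrix.vec n b\<close> l by simp
    moreover have "x \<in> carrier_vec n" unfolding x_def using Q by auto
    ultimately show "(\<Sum>m<n. M l m * x $ m) = b l" using l
      by (simp add: A_def mult_mat_vec_def scalar_prod_def lessThan_atLeast0)
  qed
qed


lemma alt_step: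
  fixes f :: "nat \<Rightarrow> int"
  shows "(\<Sum>j\<le>Suc n. (-1)^j * int (Suc n choose j) * f j) =
         (\<Sum>j\<le>n. (-1)^j * int (n choose j) * f j) - (\<Sum>j\<le>n. (-1)^j * int (n choose j) * f (Suc j))"
proof -
  have "(\<Sum>j\<le>Suc n. (-1)^j * int (Suc n choose j) * f j) =
        f 0 + (\<Sum>j\<le>n. (-1)^(Suc j) * int (Suc n choose Suc j) * f (Suc j))"
    by (subst sum.atMost_Suc_shift) simp
  also have "\<dots> = f 0 + (\<Sum>j\<le>n. (-1)^(Suc j) * int (n choose Suc j) * f (Suc j)
                 - (-1)^j * int (n choose j) * f (Suc j))"
    by (intro arg_cong2[where f="(+)"] refl sum.cong) (auto simp: algebra_simps)
  also have "\<dots> = f 0 + (\<Sum>j\<le>n. (-1)^(Suc j) * int (n choose Suc j) * f (Suc j))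
                 - (\<Sum>j\<le>n. (-1)^j * int (n choose j) * f (Suc j))"
    by (simp add: sum_subtractf)
  also have "f 0 + (\<Sum>j\<le>n. (-1)^(Suc j) * int (n choose Suc j) * f (Suc j))
           = (\<Sum>j\<le>Suc n. (-1)^j * int (n choose j) * f j)"
    by (subst sum.atMost_Suc_shift) simp
  also have "\<dots> = (\<Sum>j\<le>n. (-1)^j * int (n choose j) * f j)"
    by simp
  finally show ?thesis .
qed

lemma alt_binom_zero:
  "r < n \<Longrightarrow> (\<Sum>j\<le>n. (-1)^j * int (n choose j) * int (m + j choose r)) = 0"
proof (induction n arbitrary: m r)
  case 0 then show ?case by simp
next
  case (Suc n)
  have eq: "(\<Sum>j\<le>Suc n. (-1)^j * int (Suc n choose j) * int (m + j choose r)) =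
     (\<Sum>j\<le>n. (-1)^j * int (n choose j) * int (m + j choose r)) -
     (\<Sum>j\<le>n. (-1)^j * int (n choose j) * int (Suc m + j choose r))"
    using alt_step[of n "\<lambda>j. int (m + j choose r)"] by simp
  show ?case
  proof (cases "r < n")
    case True
    then show ?thesis using eq Suc.IH[of r m] Suc.IH[of r "Suc m"] by simp
  next
    case False
    hence r: "r = n" using Suc.prems by simp
    show ?thesis
    proof (cases n)
      case 0 then show ?thesis using eq r by simp
    next
      case (Suc n')
      have "(\<Sum>j\<le>n. (-1)^j * int (n choose j) * int (Suc m + j choose r)) =
            (\<Sum>j\<le>n. (-1)^j * int (n choose j) * int (m + j choose r)) +
            (\<Sum>j\<le>n. (-1)^j * int (n choose j) * int (m + j choose n'))"
        unfolding sum.distrib[symmetric] using r Suc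
        by (intro sum.cong) (auto simp: algebra_simps)
      moreover have "(\<Sum>j\<le>n. (-1)^j * int (n choose j) * int (m + j choose n')) = 0"
        using Suc.IH[of n' m] Suc by simp
      ultimately show ?thesis using eq by simp
    qed
  qed
qed

lemma binom_aux: "1 \<le> l \<Longrightarrow> (l + j choose Suc j) * Suc j = (l + j choose j) * l"
proof -
  assume l: "1 \<le> l"
  have "Suc j * (l + j choose Suc j) = (l + j) * ((l + j - 1) choose j)"
    by (rule binomial_absorption)
  also have "\<dots> = (l + j - j) * (l + j choose j)"
    by (rule binomial_absorb_comp[symmetric])
  finally show ?thesis by (simp add: mult.commute)
qed

lemma binom_sym_aux: "1 \<le> l \<Longrightarrow> (l + j choose Suc j) = (l + j choose (l - 1))"
  by (subst binomial_symmetric) auto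

lemma int_sl: "1 \<le> n \<Longrightarrow> (\<Sum>j\<le>n. (-1)^(n+j) * real (n choose j) * real ((n + j) choose j) / real (Suc j)) = 0"
proof -
  assume n: "1 \<le> n"
  have "(\<Sum>j\<le>n. (-1)^(n+j) * real (n choose j) * real ((n + j) choose j) / real (Suc j))
      = (\<Sum>j\<le>n. (-1)^n / real n * real_of_int ((-1)^j * int (n choose j) * int (n + j choose (n - 1))))"
  proof (intro sum.cong refl)
    fix j assume "j \<in> {..n}"
    have m: "real (n + j choose j) * real n = real (n + j choose (n - 1)) * real (Suc j)"
      using binom_aux[OF n, of j] binom_sym_aux[OF n, of j] by (metis of_nat_mult)
    have e: "real (n + j choose j) / real (Suc j) = real (n + j choose (n - 1)) / real n"
      using m n by (subst frac_eq_eq) auto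
    have "(-1)^(n+j) * real (n choose j) * real ((n + j) choose j) / real (Suc j)
        = (-1)^n * (-1)^j * real (n choose j) * (real ((n + j) choose j) / real (Suc j))"
      by (simp add: power_add)
    also have "\<dots> = (-1)^n * (-1)^j * real (n choose j) * (real (n + j choose (n - 1)) / real n)"
      by (simp only: e)
    also have "\<dots> = (-1)^n / real n * real_of_int ((-1)^j * int (n choose j) * int (n + j choose (n - 1)))"
      by simp
    finally show "(-1)^(n+j) * real (n choose j) * real ((n + j) choose j) / real (Suc j) =
          (-1)^n / real n * real_of_int ((-1)^j * int (n choose j) * int (n + j choose (n - 1)))" .
  qed
  also have "\<dots> = (-1)^n / real n * real_of_int (\<Sum>j\<le>n. (-1)^j * int (n choose j) * int (n + j choose (n - 1)))"
    by (simp only: of_int_sum sum_distrib_left)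
  also have "\<dots> = 0" using alt_binom_zero[of "n - 1" n n] n by simp
  finally show ?thesis .
qed


definition lc :: "nat \<Rightarrow> nat \<Rightarrow> real" where
  "lc l j = sqrt (2 * real l + 1) * ((-1) ^ (l + j) * real (l choose j) * real ((l + j) choose j))"

lemma orth_leg_sum: "orth_leg l x = (\<Sum>j\<le>l. lc l j * x ^ j)"
  unfolding orth_leg_def shifted_legendre_def lc_def sum_distrib_left by (simp add: mult.assoc)

definition FF :: "nat \<Rightarrow> real \<Rightarrow> real" where
  "FF l x = (\<Sum>j\<le>l. lc l j * x ^ Suc j / real (Suc j))"

lemma FF_deriv: "(FF l has_real_derivative orth_leg l x) (at x within S)"
proof -
  have t: "\<And>j. ((\<lambda>x. lc l j / real (Suc j) * x ^ Suc j) has_real_derivative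
           lc l j / real (Suc j) * (real (Suc j) * x ^ (Suc j - Suc 0))) (at x within S)"
    by (intro DERIV_cmult DERIV_pow)
  have "((\<lambda>x. \<Sum>j\<le>l. lc l j / real (Suc j) * x ^ Suc j) has_real_derivative
          (\<Sum>j\<le>l. lc l j / real (Suc j) * (real (Suc j) * x ^ (Suc j - Suc 0)))) (at x within S)"
    by (rule DERIV_sum) (rule t)
  moreover have "(\<Sum>j\<le>l. lc l j / real (Suc j) * (real (Suc j) * x ^ (Suc j - Suc 0))) = orth_leg l x"
    unfolding orth_leg_sum by (intro sum.cong) auto
  moreover have "(\<lambda>x. \<Sum>j\<le>l. lc l j / real (Suc j) * x ^ Suc j) = FF l"
    unfolding FF_def by (intro ext sum.cong) auto
  ultimately show ?thesis by simp
qed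

lemma FF_0: "FF l 0 = 0" unfolding FF_def by simp

lemma FF_1: "FF l 1 = (if l = 0 then 1 else 0)"
proof (cases "l = 0")
  case True then show ?thesis by (simp add: FF_def lc_def)
next
  case False
  have "FF l 1 = sqrt (2 * real l + 1) *
     (\<Sum>j\<le>l. (-1)^(l+j) * real (l choose j) * real ((l + j) choose j) / real (Suc j))"
    unfolding FF_def lc_def sum_distrib_left by (simp add: mult.assoc)
  also have "\<dots> = 0" using int_sl[of l] False by simp
  finally show ?thesis using False by simp
qed

lemma FTC01:
  assumes "\<And>x. (G has_real_derivative g x) (at x within {a..b})" "a \<le> b"
  shows "integral {a..b} g = G b - G a"
  apply (rule integral_unique, rule fundamental_theorem_of_calculus[OF assms(2)])
  using assms(1) by (simp add: has_real_derivative_iff_has_vector_derivative)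

lemma int_orth: "0 \<le> t \<Longrightarrow> integral {0..t} (orth_leg l) = FF l t"
  using FTC01[of "FF l" "orth_leg l" 0 t] FF_deriv FF_0 by simp

definition PL :: "nat \<Rightarrow> real poly" where "PL l = (\<Sum>j\<le>l. monom (lc l j) j)"
definition PF :: "nat \<Rightarrow> real poly" where "PF l = (\<Sum>j\<le>l. monom (lc l j / real (Suc j)) (Suc j))"

lemma poly_PL: "poly (PL l) = orth_leg l"
  by (rule ext) (simp add: PL_def poly_sum poly_monom orth_leg_sum)

lemma poly_PF: "poly (PF l) = FF l"
  by (rule ext) (simp add: PF_def poly_sum poly_monom FF_def)

lemma degree_PL: "degree (PL l) \<le> l"
  unfolding PL_def by (rule degree_sum_le) (auto intro: order.trans[OF degree_monom_le])

lemma degree_PF: "degree (PF l) \<le> Suc l"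
  unfolding PF_def by (rule degree_sum_le) (auto intro: order.trans[OF degree_monom_le])

lemma orth_leg_0: "orth_leg 0 x = 1"
  by (simp add: orth_leg_def shifted_legendre_def)


lemma energy:
  fixes X :: "nat \<Rightarrow> nat \<Rightarrow> real" and g :: "nat \<Rightarrow> complex" and c :: real and q :: complex
  assumes s: "0 < s"
  and XX: "\<And>l m. l < s \<Longrightarrow> m < s \<Longrightarrow> X l m + X m l = (if l = 0 \<and> m = 0 then 1 else 0)"
  and g: "\<And>l. l < s \<Longrightarrow> g l = of_real c * (if l = 0 then 1 else 0) + q * (\<Sum>m<s. of_real (X l m) * g m)"
  shows "Re q * (\<Sum>l<s. (cmod (g l))^2) = c * Re (q * g 0) + (cmod q)^2 * (cmod (g 0))^2 / 2"
proof -
  define r where "r = (\<Sum>l<s. (cmod (g l))^2)"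
  define N where "N = (\<Sum>l<s. cnj (g l) * g l)"
  define Q where "Q = (\<Sum>l<s. \<Sum>m<s. of_real (X l m) * (cnj (g l) * g m))"
  have Nr: "N = of_real r"
    unfolding N_def r_def of_real_sum
    by (intro sum.cong refl) (metis complex_norm_square mult.commute)
  have "N = (\<Sum>l<s. (if l = 0 then of_real c * cnj (g 0) else 0) + q * (\<Sum>m<s. of_real (X l m) * (cnj (g l) * g m)))"
    unfolding N_def
  proof (intro sum.cong refl)
    fix l assume "l \<in> {..<s}"
    hence "g l = of_real c * (if l = 0 then 1 else 0) + q * (\<Sum>m<s. of_real (X l m) * g m)" using g by simp
    hence "cnj (g l) * g l = cnj (g l) * (of_real c * (if l = 0 then 1 else 0)) + q * (\<Sum>m<s. cnj (g l) * (of_real (X l m) * g m))"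
      by (metis (no_types) distrib_left mult.left_commute sum_distrib_left)
    also have "\<dots> = (if l = 0 then of_real c * cnj (g 0) else 0) + q * (\<Sum>m<s. of_real (X l m) * (cnj (g l) * g m))"
      by (auto simp: algebra_simps)
    finally show "cnj (g l) * g l = (if l = 0 then of_real c * cnj (g 0) else 0) + q * (\<Sum>m<s. of_real (X l m) * (cnj (g l) * g m))" .
  qed
  also have "\<dots> = of_real c * cnj (g 0) + q * Q"
    unfolding sum.distrib Q_def sum_distrib_left[symmetric] using s by simp
  finally have N1: "N = of_real c * cnj (g 0) + q * Q" .
  have cQ: "cnj Q = (\<Sum>l<s. \<Sum>m<s. of_real (X m l) * (cnj (g l) * g m))"
    unfolding Q_def cnj_sum by (subst sum.swap) (simp add: mult.commute)
  have "Q + cnj Q = (\<Sum>l<s. \<Sum>m<s. of_real (X l m) * (cnj (g l) * g m) + of_real (X m l) * (cnj (g l) * g m))"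
    unfolding cQ by (simp only: Q_def sum.distrib)
  also have "\<dots> = (\<Sum>l<s. \<Sum>m<s. of_real (X l m + X m l) * (cnj (g l) * g m))"
    by (intro sum.cong refl) (simp add: distrib_right)
  also have "\<dots> = (\<Sum>l<s. \<Sum>m<s. (if l = 0 \<and> m = 0 then cnj (g 0) * g 0 else 0))"
    by (intro sum.cong refl) (simp add: XX)
  also have "\<dots> = (\<Sum>l<s. if l = 0 then cnj (g 0) * g 0 else 0)"
    by (intro sum.cong refl) (use s in auto)
  also have "\<dots> = cnj (g 0) * g 0"
    using s by simp
  finally have QQ: "Q + cnj Q = cnj (g 0) * g 0" .
  have gg: "cnj (g 0) * g 0 = of_real ((cmod (g 0))^2)" by (metis complex_norm_square mult.commute)
  have "Re (Q + cnj Q) = Re (cnj (g 0) * g 0)" using QQ by simp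
  hence "2 * Re Q = (cmod (g 0))^2" unfolding gg by simp
  have "N = cnj N" using Nr by simp
  moreover have "cnj N = of_real c * g 0 + cnj q * cnj Q" using N1 by simp
  ultimately have "q * N = q * (of_real c * g 0 + cnj q * cnj Q)" by simp
  hence "q * N = of_real c * (q * g 0) + (q * cnj q) * cnj Q" by (simp add: algebra_simps)
  hence "Re (q * N) = c * Re (q * g 0) + (cmod q)^2 * Re Q"
    by (simp add: complex_norm_square[symmetric])
  moreover have "Re (q * N) = Re q * r" using Nr by simp
  moreover have "(cmod q)^2 * Re Q = (cmod q)^2 * (cmod (g 0))^2 / 2"
    using \<open>2 * Re Q = (cmod (g 0))^2\<close> by simp
  ultimately show ?thesis unfolding r_def by linarith
qed


definition aa :: "(nat \<Rightarrow> real) \<Rightarrow> nat \<Rightarrow> nat \<Rightarrow> real" where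
  "aa \<tau> i l = integral {0..\<tau> i} (orth_leg l)"
definition XX :: "(nat \<Rightarrow> real) \<Rightarrow> nat \<Rightarrow> nat \<Rightarrow> nat \<Rightarrow> real" where
  "XX \<tau> k l m = (\<Sum>j<k. quad_weight \<tau> k j * orth_leg l (\<tau> j) * aa \<tau> j m)"
definition gam :: "(nat \<Rightarrow> real) \<Rightarrow> nat \<Rightarrow> (nat \<Rightarrow> complex) \<Rightarrow> nat \<Rightarrow> complex" where
  "gam \<tau> k Y l = (\<Sum>j<k. of_real (quad_weight \<tau> k j * orth_leg l (\<tau> j)) * Y j)"

lemma L1: "(\<Sum>j<k. of_real (hbvm_A \<tau> k s i j) * Y j) = (\<Sum>l<s. of_real (aa \<tau> i l) * gam \<tau> k Y l)"
proof -
  have "(\<Sum>j<k. of_real (hbvm_A \<tau> k s i j) * Y j) =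
        (\<Sum>j<k. \<Sum>l<s. of_real (aa \<tau> i l) * (of_real (quad_weight \<tau> k j * orth_leg l (\<tau> j)) * Y j))"
    unfolding hbvm_A_def aa_def of_real_sum sum_distrib_right
    by (intro sum.cong refl) (simp add: algebra_simps)
  also have "\<dots> = (\<Sum>l<s. of_real (aa \<tau> i l) * gam \<tau> k Y l)"
    unfolding gam_def sum_distrib_left by (rule sum.swap)
  finally show ?thesis .
qed

lemma L2:
  assumes "\<forall>j<k. Y j = c + q * (\<Sum>m<s. of_real (aa \<tau> j m) * g m)"
  shows "gam \<tau> k Y l = c * of_real (\<Sum>j<k. quad_weight \<tau> k j * orth_leg l (\<tau> j))
           + q * (\<Sum>m<s. of_real (XX \<tau> k l m) * g m)"
proof -
  have "gam \<tau> k Y l = (\<Sum>j<k. c * of_real (quad_weight \<tau> k j * orth_leg l (\<tau> j))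
      + q * (\<Sum>m<s. of_real (quad_weight \<tau> k j * orth_leg l (\<tau> j) * aa \<tau> j m) * g m))"
    unfolding gam_def
  proof (intro sum.cong refl)
    fix j assume "j \<in> {..<k}"
    hence Yj: "Y j = c + q * (\<Sum>m<s. of_real (aa \<tau> j m) * g m)" using assms by simp
    show "of_real (quad_weight \<tau> k j * orth_leg l (\<tau> j)) * Y j = c * of_real (quad_weight \<tau> k j * orth_leg l (\<tau> j))
      + q * (\<Sum>m<s. of_real (quad_weight \<tau> k j * orth_leg l (\<tau> j) * aa \<tau> j m) * g m)"
      unfolding Yj distrib_left sum_distrib_left by (simp add: algebra_simps)
  qed
  also have "\<dots> = c * of_real (\<Sum>j<k. quad_weight \<tau> k j * orth_leg l (\<tau> j))
      + q * (\<Sum>m<s. \<Sum>j<k. of_real (quad_weight \<tau> k j * orth_leg l (\<tau> j) * aa \<tau> j m) * g m)"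
    unfolding sum.distrib of_real_sum sum_distrib_left[symmetric] by (subst sum.swap) simp
  also have "\<dots> = c * of_real (\<Sum>j<k. quad_weight \<tau> k j * orth_leg l (\<tau> j))
           + q * (\<Sum>m<s. of_real (XX \<tau> k l m) * g m)"
    unfolding XX_def of_real_sum sum_distrib_right by simp
  finally show ?thesis .
qed

lemma real_facts:
  fixes k s :: nat and \<tau> :: "nat \<Rightarrow> real"
  assumes "1 \<le> s"
    and tau: "\<forall>i<k. \<tau> i \<in> {0..1}"
    and ex: "\<forall>p :: real poly. degree p < 2 * s \<longrightarrow>
           (\<Sum>i<k. quad_weight \<tau> k i * poly p (\<tau> i)) = integral {0..1} (poly p)"
  shows "\<And>l. l < s \<Longrightarrow> (\<Sum>j<k. quad_weight \<tau> k j * orth_leg l (\<tau> j)) = (if l = 0 then 1 else 0)"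
    and "\<And>l m. l < s \<Longrightarrow> m < s \<Longrightarrow> XX \<tau> k l m + XX \<tau> k m l = (if l = 0 \<and> m = 0 then 1 else 0)"
proof -
  fix l assume l: "l < s"
  have "degree (PL l) < 2 * s" using degree_PL[of l] l by simp
  hence "(\<Sum>j<k. quad_weight \<tau> k j * orth_leg l (\<tau> j)) = integral {0..1} (orth_leg l)"
    using ex poly_PL[of l] by metis
  also have "\<dots> = FF l 1" by (rule int_orth) simp
  finally show "(\<Sum>j<k. quad_weight \<tau> k j * orth_leg l (\<tau> j)) = (if l = 0 then 1 else 0)"
    by (simp add: FF_1)
next
  fix l m assume l: "l < s" and m: "m < s"
  define P where "P = PL l * PF m + PL m * PF l"
  have dP: "degree P < 2 * s"
  proof -
    have "degree (PL l * PF m) \<le> l + Suc m"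
      using degree_mult_le[of "PL l" "PF m"] degree_PL[of l] degree_PF[of m] by linarith
    moreover have "degree (PL m * PF l) \<le> m + Suc l"
      using degree_mult_le[of "PL m" "PF l"] degree_PL[of m] degree_PF[of l] by linarith
    ultimately show ?thesis unfolding P_def using degree_add_le_max[of "PL l * PF m" "PL m * PF l"] l m
      by linarith
  qed
  have pP: "\<And>x. poly P x = orth_leg l x * FF m x + orth_leg m x * FF l x"
    by (simp add: P_def poly_PL poly_PF algebra_simps)
  have "XX \<tau> k l m + XX \<tau> k m l = (\<Sum>j<k. quad_weight \<tau> k j * poly P (\<tau> j))"
    unfolding XX_def sum.distrib[symmetric] pP
  proof (intro sum.cong refl)
    fix j assume "j \<in> {..<k}"
    hence "0 \<le> \<tau> j" using tau by auto
    hence "aa \<tau> j m = FF m (\<tau> j)" "aa \<tau> j l = FF l (\<tau> j)" unfolding aa_def by (auto intro: int_orth)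
    thus "quad_weight \<tau> k j * orth_leg l (\<tau> j) * aa \<tau> j m + quad_weight \<tau> k j * orth_leg m (\<tau> j) * aa \<tau> j l =
         quad_weight \<tau> k j * (orth_leg l (\<tau> j) * FF m (\<tau> j) + orth_leg m (\<tau> j) * FF l (\<tau> j))"
      by (simp add: algebra_simps)
  qed
  also have "\<dots> = integral {0..1} (poly P)" using ex dP by blast
  also have "\<dots> = FF l 1 * FF m 1 - FF l 0 * FF m 0"
  proof (rule FTC01)
    fix x
    show "((\<lambda>x. FF l x * FF m x) has_real_derivative poly P x) (at x within {0..1})"
      unfolding pP by (rule DERIV_mult[OF FF_deriv FF_deriv])
  qed simp
  also have "\<dots> = (if l = 0 \<and> m = 0 then 1 else 0)" by (simp add: FF_1 FF_0)
  finally show "XX \<tau> k l m + XX \<tau> k m l = (if l = 0 \<and> m = 0 then 1 else 0)" .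
qed

lemma cmod_1_plus_sq: "(cmod (1 + z))^2 = 1 + 2 * Re z + (cmod z)^2"
  unfolding cmod_power2 by (simp add: power2_eq_square algebra_simps)


lemma gam0: "gam \<tau> k Y 0 = (\<Sum>j<k. of_real (quad_weight \<tau> k j) * Y j)"
  unfolding gam_def by (simp add: orth_leg_0)

lemma delta_sum_aux:
  fixes X :: "nat \<Rightarrow> real" and v :: "nat \<Rightarrow> complex"
  assumes l: "l < s"
  shows "(\<Sum>m<s. ((if l = m then 1 else 0) - q * of_real (X m)) * v m) = v l - q * (\<Sum>m<s. of_real (X m) * v m)"
proof -
  have "(\<Sum>m<s. ((if l = m then 1 else 0) - q * of_real (X m)) * v m) =
        (\<Sum>m<s. (if l = m then v m else 0) - q * (of_real (X m) * v m))"
    by (intro sum.cong refl) (auto simp: algebra_simps)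
  also have "\<dots> = v l - q * (\<Sum>m<s. of_real (X m) * v m)"
    using l by (simp add: sum_subtractf sum_distrib_left)
  finally show ?thesis .
qed

theorem theorem1p2:
  fixes k s :: nat and \<tau> :: "nat \<Rightarrow> real"
  assumes "1 \<le> s" and "s \<le> k"
    and "inj_on \<tau> {..<k}"
    and "\<forall>i<k. \<tau> i \<in> {0..1}"
    and "\<forall>p :: real poly. degree p < 2 * s \<longrightarrow>
           (\<Sum>i<k. quad_weight \<tau> k i * poly p (\<tau> i)) = integral {0..1} (poly p)"
  shows "perfectly_A_stable (hbvm_A \<tau> k s) (quad_weight \<tau> k) k"
proof -
  have s0: "0 < s" using assms(1) by simp
  note b = real_facts(1)[OF assms(1) assms(4) assms(5)]
  note XXs = real_facts(2)[OF assms(1) assms(4) assms(5)]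
  let ?A = "hbvm_A \<tau> k s" and ?w = "quad_weight \<tau> k"
  let ?X = "XX \<tau> k"
  have stage_gam: "\<forall>l<s. gam \<tau> k Y l = of_real c * (if l = 0 then 1 else 0) + q * (\<Sum>m<s. of_real (?X l m) * gam \<tau> k Y m)"
    if "\<forall>j<k. Y j = of_real c + q * (\<Sum>j'<k. of_real (?A j j') * Y j')" for Y c q
  proof (intro allI impI)
    fix l assume l: "l < s"
    have "\<forall>j<k. Y j = of_real c + q * (\<Sum>m<s. of_real (aa \<tau> j m) * gam \<tau> k Y m)"
      using that by (simp add: L1)
    from L2[OF this, of l] show "gam \<tau> k Y l = of_real c * (if l = 0 then 1 else 0) + q * (\<Sum>m<s. of_real (?X l m) * gam \<tau> k Y m)"
      using b[OF l] by simp
  qed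
  have energy_Y: "Re q * (\<Sum>l<s. (cmod (gam \<tau> k Y l))^2) = c * Re (q * gam \<tau> k Y 0) + (cmod q)^2 * (cmod (gam \<tau> k Y 0))^2 / 2"
    if "\<forall>j<k. Y j = of_real c + q * (\<Sum>j'<k. of_real (?A j j') * Y j')" for Y c q
    using energy[OF s0 XXs, of "gam \<tau> k Y" c q] stage_gam[OF that] by simp
  have R_sq: "(cmod (1 + q * (\<Sum>j<k. of_real (?w j) * Y j)))^2 = 1 + 2 * Re q * (\<Sum>l<s. (cmod (gam \<tau> k Y l))^2)"
    if "rk_stages_ok ?A k q Y" for Y q
  proof -
    have st: "\<forall>j<k. Y j = of_real 1 + q * (\<Sum>j'<k. of_real (?A j j') * Y j')"
      using that unfolding rk_stages_ok_def by simp
    have "(cmod (1 + q * gam \<tau> k Y 0))^2 = 1 + 2 * Re (q * gam \<tau> k Y 0) + (cmod q)^2 * (cmod (gam \<tau> k Y 0))^2"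
      unfolding cmod_1_plus_sq by (simp add: norm_mult power_mult_distrib)
    also have "\<dots> = 1 + 2 * Re q * (\<Sum>l<s. (cmod (gam \<tau> k Y l))^2)"
      using energy_Y[OF st] by simp
    finally show ?thesis unfolding gam0 .
  qed
  have homog_zero: "\<forall>l<s. g l = 0"
    if "Re q < 0" "\<forall>l<s. g l = q * (\<Sum>m<s. of_real (?X l m) * g m)" for q g
  proof -
    have e: "Re q * (\<Sum>l<s. (cmod (g l))^2) = (cmod q)^2 * (cmod (g 0))^2 / 2"
      using energy[OF s0 XXs, of g 0 q] that(2) by simp
    have "0 \<le> (cmod q)^2 * (cmod (g 0))^2 / 2" by simp
    hence "Re q * (\<Sum>l<s. (cmod (g l))^2) \<ge> 0" using e by linarith
    moreover have "(\<Sum>l<s. (cmod (g l))^2) \<ge> 0" by (intro sum_nonneg) simp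
    ultimately have "(\<Sum>l<s. (cmod (g l))^2) = 0" using that(1)
      by (meson antisym mult_less_0_iff not_le)
    hence "\<forall>l\<in>{..<s}. (cmod (g l))^2 = 0" by (subst (asm) sum_nonneg_eq_0_iff) auto
    thus ?thesis by simp
  qed
  have uniq: "Y1 = Y2" if "Re q < 0" "rk_stages_ok ?A k q Y1" "rk_stages_ok ?A k q Y2" for q Y1 Y2
  proof -
    define D where "D = (\<lambda>j. Y1 j - Y2 j)"
    have Dst: "\<forall>j<k. D j = of_real 0 + q * (\<Sum>j'<k. of_real (?A j j') * D j')"
    proof (intro allI impI)
      fix j assume j: "j < k"
      have "Y1 j = 1 + q * (\<Sum>j'<k. of_real (?A j j') * Y1 j')"
        "Y2 j = 1 + q * (\<Sum>j'<k. of_real (?A j j') * Y2 j')"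
        using that(2,3) j unfolding rk_stages_ok_def by blast+
      hence "D j = q * ((\<Sum>j'<k. of_real (?A j j') * Y1 j') - (\<Sum>j'<k. of_real (?A j j') * Y2 j'))"
        unfolding D_def by (simp add: right_diff_distrib)
      also have "\<dots> = q * (\<Sum>j'<k. of_real (?A j j') * D j')"
        unfolding D_def sum_subtractf[symmetric] by (simp add: right_diff_distrib)
      finally show "D j = of_real 0 + q * (\<Sum>j'<k. of_real (?A j j') * D j')" by simp
    qed
    have "\<forall>l<s. gam \<tau> k D l = q * (\<Sum>m<s. of_real (?X l m) * gam \<tau> k D m)"
      using stage_gam[OF Dst] by simp
    hence g0: "\<forall>l<s. gam \<tau> k D l = 0" using homog_zero that(1) by blast
    show ?thesis
    proof
      fix j
      show "Y1 j = Y2 j"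
      proof (cases "j < k")
        case True
        have "D j = q * (\<Sum>l<s. of_real (aa \<tau> j l) * gam \<tau> k D l)" using Dst True by (simp add: L1)
        also have "\<dots> = 0" using g0 by simp
        finally show ?thesis unfolding D_def by simp
      next
        case False then show ?thesis using that(2,3) unfolding rk_stages_ok_def by simp
      qed
    qed
  qed
  have exist: "\<exists>Y. rk_stages_ok ?A k q Y" if "Re q < 0" for q
  proof -
    have "\<exists>v. \<forall>l<s. (\<Sum>m<s. ((if l = m then 1 else 0) - q * of_real (?X l m)) * v m) = (if l = 0 then 1 else 0)"
    proof (rule solve_lin)
      fix v :: "nat \<Rightarrow> complex"
      assume h: "\<forall>l<s. (\<Sum>m<s. ((if l = m then 1 else 0) - q * of_real (?X l m)) * v m) = 0"
      have "\<forall>l<s. v l = q * (\<Sum>m<s. of_real (?X l m) * v m)"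
      proof (intro allI impI)
        fix l assume l: "l < s"
        have "(\<Sum>m<s. ((if l = m then 1 else 0) - q * of_real (?X l m)) * v m)
            = v l - q * (\<Sum>m<s. of_real (?X l m) * v m)"
          using l by (rule delta_sum_aux)
        thus "v l = q * (\<Sum>m<s. of_real (?X l m) * v m)" using h l by simp
      qed
      thus "\<forall>l<s. v l = 0" using homog_zero that by blast
    qed
    then obtain g where g: "\<forall>l<s. (\<Sum>m<s. ((if l = m then 1 else 0) - q * of_real (?X l m)) * g m) = (if l = 0 then 1 else 0)"
      by blast
    have g': "\<forall>l<s. g l = (if l = 0 then 1 else 0) + q * (\<Sum>m<s. of_real (?X l m) * g m)"
    proof (intro allI impI)
      fix l assume l: "l < s"
      have "(\<Sum>m<s. ((if l = m then 1 else 0) - q * of_real (?X l m)) * g m)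
          = g l - q * (\<Sum>m<s. of_real (?X l m) * g m)"
        using l by (rule delta_sum_aux)
      thus "g l = (if l = 0 then 1 else 0) + q * (\<Sum>m<s. of_real (?X l m) * g m)" using g l by (simp add: algebra_simps)
    qed
    define Y where "Y = (\<lambda>j. if j < k then 1 + q * (\<Sum>l<s. of_real (aa \<tau> j l) * g l) else 0)"
    have gY: "\<forall>l<s. gam \<tau> k Y l = g l"
    proof (intro allI impI)
      fix l assume l: "l < s"
      have "\<forall>j<k. Y j = 1 + q * (\<Sum>m<s. of_real (aa \<tau> j m) * g m)" unfolding Y_def by simp
      from L2[OF this, of l] show "gam \<tau> k Y l = g l" using b[OF l] g' l by simp
    qed
    have "rk_stages_ok ?A k q Y"
      unfolding rk_stages_ok_def
    proof (intro conjI allI impI)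
      fix i assume "k \<le> i" then show "Y i = 0" unfolding Y_def by simp
    next
      fix i assume i: "i < k"
      have "(\<Sum>j<k. of_real (?A i j) * Y j) = (\<Sum>l<s. of_real (aa \<tau> i l) * g l)"
        unfolding L1 using gY by simp
      thus "Y i = 1 + q * (\<Sum>j<k. of_real (?A i j) * Y j)" unfolding Y_def using i by simp
    qed
    thus ?thesis by blast
  qed
  show ?thesis
    unfolding perfectly_A_stable_def rk_abs_stability_region_def
  proof (intro subset_antisym subsetI)
    fix q assume "q \<in> {q. (\<exists>!Y. rk_stages_ok ?A k q Y) \<and> cmod (rk_stability_fun ?A ?w k q) < 1}"
    hence ex1: "\<exists>!Y. rk_stages_ok ?A k q Y" and lt: "cmod (rk_stability_fun ?A ?w k q) < 1" by auto
    define Y where "Y = (THE Y. rk_stages_ok ?A k q Y)"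
    have Y: "rk_stages_ok ?A k q Y" unfolding Y_def using theI'[OF ex1] .
    have R: "rk_stability_fun ?A ?w k q = 1 + q * (\<Sum>j<k. of_real (?w j) * Y j)"
      unfolding rk_stability_fun_def Y_def Let_def by simp
    have "(cmod (rk_stability_fun ?A ?w k q))^2 < 1" using lt
      by (simp add: power_less_one_iff abs_square_less_1)
    hence "Re q * (\<Sum>l<s. (cmod (gam \<tau> k Y l))^2) < 0" using R_sq[OF Y] R by simp
    moreover have "(\<Sum>l<s. (cmod (gam \<tau> k Y l))^2) \<ge> 0" by (intro sum_nonneg) simp
    ultimately have "Re q < 0" by (meson mult_less_0_iff not_le)
    thus "q \<in> {q. Re q < 0}" by simp
  next
    fix q assume "q \<in> {q. Re q < 0}"
    hence neg: "Re q < 0" by simp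
    obtain Y where Y: "rk_stages_ok ?A k q Y" using exist[OF neg] by blast
    have ex1: "\<exists>!Y. rk_stages_ok ?A k q Y" using Y uniq[OF neg] by blast
    have TY: "(THE Y. rk_stages_ok ?A k q Y) = Y" using ex1 Y by (metis the1_equality)
    have R: "rk_stability_fun ?A ?w k q = 1 + q * (\<Sum>j<k. of_real (?w j) * Y j)"
      unfolding rk_stability_fun_def TY Let_def by simp
    have st: "\<forall>j<k. Y j = of_real 1 + q * (\<Sum>j'<k. of_real (?A j j') * Y j')"
      using Y unfolding rk_stages_ok_def by simp
    have pos: "(\<Sum>l<s. (cmod (gam \<tau> k Y l))^2) > 0"
    proof (rule ccontr)
      assume "\<not> ?thesis"
      moreover have "(\<Sum>l<s. (cmod (gam \<tau> k Y l))^2) \<ge> 0" by (intro sum_nonneg) simp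
      ultimately have "(\<Sum>l<s. (cmod (gam \<tau> k Y l))^2) = 0" by simp
      hence z: "\<forall>l\<in>{..<s}. (cmod (gam \<tau> k Y l))^2 = 0" by (subst (asm) sum_nonneg_eq_0_iff) auto
      have "gam \<tau> k Y 0 = 1 + q * (\<Sum>m<s. of_real (?X 0 m) * gam \<tau> k Y m)"
        using stage_gam[OF st] s0 by simp
      also have "\<dots> = 1" using z by simp
      finally show False using z s0 by simp
    qed
    have "(cmod (rk_stability_fun ?A ?w k q))^2 < 1"
    proof -
      have "Re q * (\<Sum>l<s. (cmod (gam \<tau> k Y l))^2) < 0" using neg pos by (rule mult_neg_pos)
      thus ?thesis using R_sq[OF Y] R by simp
    qed
    hence "cmod (rk_stability_fun ?A ?w k q) < 1"
      by (simp add: power_less_one_iff abs_square_less_1)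
    thus "q \<in> {q. (\<exists>!Y. rk_stages_ok ?A k q Y) \<and> cmod (rk_stability_fun ?A ?w k q) < 1}"
      using ex1 by simp
  qed
qed

end
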